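(* Let $\Delta=0$ be a passive orthonomic system as described in the context. For $j\in\{1,\dots,p\}$ consider the recursive schema \[ \mathfrak{D}_j=\frac{\partial}{\partial x_j}+\sum_{(k,L)\in\mathcal{S}_{e_j}}u^k_{L+e_j}\frac{\partial}{\partial u^k_L}+\sum_{(k,L)\in\mathcal{S}\setminus\mathcal{S}_{e_j}}\mathfrak{D}_M P^\alpha\,\frac{\partial}{\partial u^k_L}, \] where in the last sum, for $(k,L)\in\mathcal{S}\setminus\mathcal{S}_{e_j}$, $\alpha$ and $M$ are chosen with $(k,L+e_j)=(i^\alpha,J^\alpha+M)$, and $\mathfrak{D}_M=\mathfrak{D}_1^{M_1}\cdots\mathfrak{D}_p^{M_p}$ is evaluated by applying the same schema recursively. This recursive schema is well defined: for every $Q\in\mathcal{B}$ the evaluation of $\mathfrak{D}_jQ$ by the schema terminates.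
   Context: Jet space: coordinates $x_1,\dots,x_p$, $u^1,\dots,u^q$ and derivatives $u^j_K$, $K\in\mathbb{N}^p$ a multi-index; $e_i$ is the $i$-th unit multi-index. $\mathcal{A}$ is the ring of smooth functions of finitely many coordinates. Total derivatives $D_i=\partial/\partial x_i+\sum_{j,K}u^j_{K+e_i}\,\partial/\partial u^j_K$, $D_K=D_1^{K_1}\cdots D_p^{K_p}$. Choose $n$ pairs $(i^\alpha,J^\alpha)\in\{1,\dots,q\}\times\mathbb{N}^p$, $J^\alpha\neq0$. $u^j_K$ is principal if $(j,K)=(i^\alpha,J^\alpha+L)$ for some $\alpha,L$, otherwise parametric. $\mathcal{S}$ is the set of $(j,K)$ with $u^j_K$ parametric, and for $L\in\mathbb{N}^p$, $\mathcal{S}_L=\{(k,K):(k,K+L)\in\mathcal{S}\}$ (a subset of $\mathcal{S}$). $\mathcal{B}\subset\mathcal{A}$ consists of functions of the $x_i$ and parametric derivatives only. Fix a ranking $\le$: a total order on $\{1,\dots,q\}\times\mathbb{N}^p$ with $(j,K)\le(j,K+L)$ and $(i,J)\le(j,K)\iff(i,J+L)\le(j,K+L)$. The system is $u^{i^\alpha}_{J^\alpha}=P^\alpha$, $P^\alpha\in\mathcal{B}$, with $\Delta^\alpha=u^{i^\alpha}_{J^\alpha}-P^\alpha$; it is passive orthonomic if (i) $P^\alpha$ depends only on $u^j_K$ with $(j,K)<(i^\alpha,J^\alpha)$, and (ii) $(i^\alpha,J^\alpha+K)=(i^\beta,J^\beta+L)$ implies $D_KP^\alpha=D_LP^\beta$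 (modulo the system). Each $Q\in\mathcal{A}$ then has a unique reduced form $\widetilde{Q}\in\mathcal{B}$ congruent to $Q$ modulo the differential ideal generated by the $\Delta^\alpha$; the intrinsic operators are $\mathfrak{D}_KP=\widetilde{D_KP}$ for $P\in\mathcal{B}$, and the displayed schema is the formula these satisfy. *)

theory Defs
  imports Main
begin

text \<open>Independent variables x_i are indexed by a finite
linearly ordered type 'i (p = CARD('i), the order fixing D_M = D_1^M1 ... D_p^Mp);
dependent variables u^j by a finite type 'u (q = CARD('u)).  Multi-indices are
functions 'i => nat; a jet coordinate u^j_K is the pair (j, K).\<close>

type_synonym ('u, 'i) jvar = "'u \<times> ('i \<Rightarrow> nat)"

definition unitmi :: "'i \<Rightarrow> 'i \<Rightarrow> nat" where
  "unitmi i = (\<lambda>k. if k = i then 1 else 0)"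

definition madd :: "('i \<Rightarrow> nat) \<Rightarrow> ('i \<Rightarrow> nat) \<Rightarrow> 'i \<Rightarrow> nat" where
  "madd K L = (\<lambda>k. K k + L k)"

definition shift :: "'i \<Rightarrow> ('u, 'i) jvar \<Rightarrow> ('u, 'i) jvar" where
  "shift j v = (fst v, madd (snd v) (unitmi j))"

text \<open>The system has leading derivatives lead \<alpha> = (i^\<alpha>, J^\<alpha>) for \<alpha> in the finite index set A.\<close>
definition principal :: "'a set \<Rightarrow> ('a \<Rightarrow> ('u, 'i) jvar) \<Rightarrow> ('u, 'i) jvar \<Rightarrow> bool" where
  "principal A lead v \<longleftrightarrow> (\<exists>\<alpha>\<in>A. \<exists>L. v = (fst (lead \<alpha>), madd (snd (lead \<alpha>)) L))"

definition parametric_set :: "'a set \<Rightarrow> ('a \<Rightarrow> ('u, 'i) jvar) \<Rightarrow> ('u, 'i) jvar set" where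
  "parametric_set A lead = {v. \<not> principal A lead v}"

definition is_ranking :: "(('u, 'i) jvar \<Rightarrow> ('u, 'i) jvar \<Rightarrow> bool) \<Rightarrow> bool" where
  "is_ranking le \<longleftrightarrow>
     (\<forall>x. le x x) \<and> (\<forall>x y. le x y \<and> le y x \<longrightarrow> x = y) \<and>
     (\<forall>x y z. le x y \<and> le y z \<longrightarrow> le x z) \<and> (\<forall>x y. le x y \<or> le y x) \<and>
     (\<forall>j K L. le (j, K) (j, madd K L)) \<and>
     (\<forall>i J j K L. le (i, J) (j, K) \<longleftrightarrow> le (i, madd J L) (j, madd K L))"

text \<open>Orthonomic system with respect to the ranking: each right-hand side P^\<alpha> is an element
of B, abstracted by the (finite) set depP \<alpha> of parametric derivatives it depends on, and
condition (i): all of them are strictly lower in the ranking than (i^\<alpha>, J^\<alpha>).\<close>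
definition orthonomic ::
  "'a set \<Rightarrow> ('a \<Rightarrow> ('u, 'i) jvar) \<Rightarrow> ('a \<Rightarrow> ('u, 'i) jvar set)
   \<Rightarrow> (('u, 'i) jvar \<Rightarrow> ('u, 'i) jvar \<Rightarrow> bool) \<Rightarrow> bool" where
  "orthonomic A lead depP le \<longleftrightarrow>
     finite A \<and> is_ranking le \<and>
     (\<forall>\<alpha>\<in>A. snd (lead \<alpha>) \<noteq> (\<lambda>_. 0)) \<and>
     (\<forall>\<alpha>\<in>A. finite (depP \<alpha>) \<and> depP \<alpha> \<subseteq> parametric_set A lead \<and>
              (\<forall>v\<in>depP \<alpha>. le v (lead \<alpha>) \<and> v \<noteq> lead \<alpha>))"

definition valid_choice ::
  "'a set \<Rightarrow> ('a \<Rightarrow> ('u, 'i) jvar) \<Rightarrow> ('i \<Rightarrow> ('u, 'i) jvar \<Rightarrow> 'a \<times> ('i \<Rightarrow> nat)) \<Rightarrow> bool" where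
  "valid_choice A lead ch \<longleftrightarrow>
     (\<forall>j v. v \<in> parametric_set A lead \<and> principal A lead (shift j v) \<longrightarrow>
        fst (ch j v) \<in> A \<and>
        shift j v = (fst (lead (fst (ch j v))), madd (snd (lead (fst (ch j v)))) (snd (ch j v))))"

text \<open>Evaluation of the schema.  evalD j V W: evaluating D_j on a function of B whose
parametric dependencies are V terminates, the result depending on W.  evalDM M V W: the same
for D_M = D_1^M1 ... D_p^Mp, evaluated innermost (largest index) first.  Being inductive,
membership means existence of a finite evaluation (derivation) tree.\<close>
inductive evalD and evalDM for A lead depP ch where
  D: "(\<forall>v\<in>V. principal A lead (shift j v) \<longrightarrow>
          evalDM A lead depP ch (snd (ch j v)) (depP (fst (ch j v))) (Wf v))
      \<Longrightarrow> W = V \<union> {shift j v | v. v \<in> V \<and> \<not> principal A lead (shift j v)}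
              \<union> (\<Union>v\<in>{v\<in>V. principal A lead (shift j v)}. Wf v)
      \<Longrightarrow> evalD A lead depP ch j V W"
| DM0: "evalDM A lead depP ch (\<lambda>_. 0) V V"
| DMs: "M \<noteq> (\<lambda>_. 0) \<Longrightarrow> i = Max {k. M k \<noteq> 0}
      \<Longrightarrow> evalD A lead depP ch i V V'
      \<Longrightarrow> evalDM A lead depP ch (\<lambda>k. M k - unitmi i k) V' W
      \<Longrightarrow> evalDM A lead depP ch M V W"

end

theory Submission imports Defs Complex_Main "HOL-Library.Infinite_Set" begin

lemma nat_incsub: "\<exists>h. strict_mono h \<and> incseq (\<lambda>n. (z::nat\<Rightarrow>nat) (h n))"
proof -
  obtain f where f: "strict_mono f" "monoseq (\<lambda>n. z (f n))" using seq_monosub by blast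
  show ?thesis
  proof (cases "incseq (\<lambda>n. z (f n))")
    case True then show ?thesis using f by blast
  next
    case False
    then have d: "decseq (\<lambda>n. z (f n))" using f(2) monoseq_iff by blast
    define N where "N = (ARG_MIN (\<lambda>n. z (f n)) n. True)"
    have mn: "z (f N) \<le> z (f n)" for n unfolding N_def
      by (metis arg_min_nat_le)
    have eq: "z (f (n + N)) = z (f N)" for n
      using mn[of "n+N"] d unfolding decseq_def by (metis le_add2 le_antisym)
    have "strict_mono (\<lambda>n. f (n + N))" using f(1) unfolding strict_mono_def by simp
    moreover have "incseq (\<lambda>n. z (f (n + N)))" unfolding incseq_def using eq by simp
    ultimately show ?thesis by blast
  qed
qed

lemma incseq_sub: "incseq X \<Longrightarrow> strict_mono h \<Longrightarrow> incseq (\<lambda>n. X (h n))"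
  unfolding incseq_def by (meson strict_mono_leD)

lemma multi_incsub:
  assumes "finite S"
  shows "\<exists>h. strict_mono h \<and> (\<forall>k\<in>S. incseq (\<lambda>n. (y::nat \<Rightarrow> 'i \<Rightarrow> nat) (h n) k))"
  using assms
proof (induction S)
  case empty
  have "strict_mono (\<lambda>n::nat. n)" by (simp add: strict_mono_def)
  then show ?case by blast
next
  case (insert k S)
  then obtain h where h: "strict_mono h" "\<forall>k\<in>S. incseq (\<lambda>n. y (h n) k)" by blast
  obtain h2 where h2: "strict_mono h2" "incseq (\<lambda>n. y (h (h2 n)) k)"
    using nat_incsub[of "\<lambda>n. y (h n) k"] by blast
  have "strict_mono (h \<circ> h2)" using h h2 strict_mono_o by blast
  moreover have "\<forall>k'\<in>insert k S. incseq (\<lambda>n. y ((h \<circ> h2) n) k')"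
    using h2 h(2) incseq_sub[OF _ h2(1)] by auto
  ultimately show ?case by blast
qed

lemma dickson:
  fixes x :: "nat \<Rightarrow> 'u::finite \<times> ('i::finite \<Rightarrow> nat)"
  shows "\<exists>i j. i < j \<and> fst (x i) = fst (x j) \<and> (\<forall>k. snd (x i) k \<le> snd (x j) k)"
proof -
  have "UNIV = (\<Union>u. {n. fst (x n) = u})" by auto
  then obtain u where inf: "infinite {n. fst (x n) = u}"
    by (metis finite_UN finite infinite_UNIV_nat)
  define g where "g = enumerate {n. fst (x n) = u}"
  have g1: "fst (x (g n)) = u" for n unfolding g_def using enumerate_in_set[OF inf] by auto
  have g2: "strict_mono g" unfolding g_def strict_mono_def using enumerate_mono[OF _ inf] by blast
  obtain h where h: "strict_mono h" "\<forall>k\<in>UNIV. incseq (\<lambda>n. snd (x (g (h n))) k)"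
    using multi_incsub[of "UNIV::'i set" "\<lambda>n. snd (x (g n))"] by auto
  have "g (h 0) < g (h 1)" using g2 h(1) unfolding strict_mono_def by simp
  moreover have "\<forall>k. snd (x (g (h 0))) k \<le> snd (x (g (h 1))) k"
    using h(2) unfolding incseq_def by auto
  ultimately show ?thesis using g1 by metis
qed

lemma madd_inj: "madd J L = madd K L \<Longrightarrow> J = K"
  unfolding madd_def fun_eq_iff by simp

locale sys =
  fixes A :: "'a set"
    and lead :: "'a \<Rightarrow> 'u::finite \<times> ('i::{finite,linorder} \<Rightarrow> nat)"
    and depP :: "'a \<Rightarrow> ('u, 'i) jvar set"
    and le :: "('u, 'i) jvar \<Rightarrow> ('u, 'i) jvar \<Rightarrow> bool"
    and ch :: "'i \<Rightarrow> ('u, 'i) jvar \<Rightarrow> 'a \<times> ('i \<Rightarrow> nat)"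
  assumes orth: "orthonomic A lead depP le" and vc: "valid_choice A lead ch"
begin

definition lt where "lt x y \<longleftrightarrow> le x y \<and> x \<noteq> y"
definition msh :: "('u,'i) jvar \<Rightarrow> ('i\<Rightarrow>nat) \<Rightarrow> ('u,'i) jvar" where
  "msh v M = (fst v, madd (snd v) M)"

lemma rk: "is_ranking le" using orth unfolding orthonomic_def by simp

lemmas rkd = rk[unfolded is_ranking_def]
lemmas rk1 = conjunct1[OF rkd, rule_format]
lemmas rk2 = conjunct1[OF conjunct2[OF rkd], rule_format]
lemmas rk3 = conjunct1[OF conjunct2[OF conjunct2[OF rkd]], rule_format]
lemmas rk4 = conjunct1[OF conjunct2[OF conjunct2[OF conjunct2[OF rkd]]], rule_format]
lemmas rk5 = conjunct1[OF conjunct2[OF conjunct2[OF conjunct2[OF conjunct2[OF rkd]]]], rule_format]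
lemmas rk6 = conjunct2[OF conjunct2[OF conjunct2[OF conjunct2[OF conjunct2[OF rkd]]]], rule_format]
lemma le_refl: "le x x" by (rule rk1)
lemma le_antisym: "le x y \<Longrightarrow> le y x \<Longrightarrow> x = y" by (rule rk2) (rule conjI)
lemma le_trans: "le x y \<Longrightarrow> le y z \<Longrightarrow> le x z" by (rule rk3) (rule conjI)
lemma le_total: "le x y \<or> le y x" by (rule rk4)
lemma le_mi: "le (j,K) (j, madd K L)" by (rule rk5)
lemma le_add: "le (i, J) (j, K) \<Longrightarrow> le (i, madd J L) (j, madd K L)"
  using rk6[of i J j K L] by (rule iffD1)
lemma le_msh: "le v (msh v L)"
  using le_mi[of "fst v" "snd v" L] unfolding msh_def by simp
lemma le_msh_mono: "le v w \<Longrightarrow> le (msh v L) (msh w L)"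
  using le_add[of "fst v" "snd v" "fst w" "snd w" L] unfolding msh_def by simp
lemma msh_inj: "msh v L = msh w L \<Longrightarrow> v = w"
proof -
  assume h: "msh v L = msh w L"
  then have "fst v = fst w" "madd (snd v) L = madd (snd w) L" unfolding msh_def by simp_all
  then show "v = w" using madd_inj[of "snd v" L "snd w"] by (simp add: prod_eq_iff)
qed
lemma lt_msh_mono: "lt v w \<Longrightarrow> lt (msh v L) (msh w L)"
  unfolding lt_def using le_msh_mono msh_inj by blast
lemma msh_msh: "msh (msh v L) M = msh v (madd L M)"
  unfolding msh_def madd_def by (auto simp: add.assoc)
lemma shift_msh: "shift j v = msh v (unitmi j)"
  unfolding shift_def msh_def by simp
lemma lt_le_trans: "lt x y \<Longrightarrow> le y z \<Longrightarrow> lt x z"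
  unfolding lt_def by (metis le_trans le_antisym)
lemma lt_trans: "lt x y \<Longrightarrow> lt y z \<Longrightarrow> lt x z"
  using lt_le_trans unfolding lt_def by metis
lemma le_lt_trans: "le x y \<Longrightarrow> lt y z \<Longrightarrow> lt x z"
  unfolding lt_def by (metis le_trans le_antisym)

lemma lt_shift: "lt v (shift j v)"
proof -
  have "v \<noteq> shift j v"
  proof
    assume h: "v = shift j v"
    have "snd v j = snd (shift j v) j" using arg_cong[OF h, of "\<lambda>x. snd x j"] .
    then show False by (simp add: shift_def madd_def unitmi_def)
  qed
  then show ?thesis unfolding lt_def using le_msh[of v "unitmi j"] shift_msh by simp
qed

lemma wf_lt: "wf {(x,y). lt x y}"
  unfolding wf_iff_no_infinite_down_chain
proof
  assume "\<exists>f. \<forall>i. (f (Suc i), f i) \<in> {(x,y). lt x y}"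
  then obtain f where f: "\<And>i. lt (f (Suc i)) (f i)" by auto
  have chain: "lt (f j) (f i)" if "i < j" for i j
    using that
  proof (induction j)
    case 0 then show ?case by simp
  next
    case (Suc j)
    show ?case
    proof (cases "i = j")
      case True then show ?thesis using f by simp
    next
      case False
      then have "lt (f j) (f i)" using Suc by simp
      then show ?thesis using lt_trans[OF f[of j]] by simp
    qed
  qed
  obtain i j where ij: "i < j" "fst (f i) = fst (f j)" "\<forall>k. snd (f i) k \<le> snd (f j) k"
    using dickson[of f] by blast
  have "f j = msh (f i) (\<lambda>k. snd (f j) k - snd (f i) k)"
    using ij unfolding msh_def madd_def by (auto simp: fun_eq_iff prod_eq_iff)
  then have "le (f i) (f j)" using le_msh by metis
  moreover have "le (f j) (f i)" "f j \<noteq> f i" using chain[OF ij(1)] unfolding lt_def by auto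
  ultimately show False using le_antisym by metis
qed


abbreviation par where "par \<equiv> parametric_set A lead"

lemma msh0: "msh v (\<lambda>_. 0) = v"
  unfolding msh_def madd_def by simp

lemma Max_facts:
  fixes M :: "'i \<Rightarrow> nat"
  assumes "M \<noteq> (\<lambda>_. 0)" "i = Max {k. M k \<noteq> (0::nat)}"
  shows "M i \<noteq> 0" "madd (unitmi i) (\<lambda>k. M k - unitmi i k) = M"
    "sum (\<lambda>k. M k - unitmi i k) UNIV < sum M UNIV"
proof -
  have ne: "{k. M k \<noteq> 0} \<noteq> {}" using assms(1) by auto
  show Mi: "M i \<noteq> 0" using Max_in[OF finite ne] assms(2) by simp
  show eq: "madd (unitmi i) (\<lambda>k. M k - unitmi i k) = M"
    using Mi unfolding madd_def unitmi_def by (auto simp: fun_eq_iff)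
  have pk: "M k = (M k - unitmi i k) + unitmi i k" for k
    using Mi by (simp add: unitmi_def)
  have "sum M UNIV = sum (\<lambda>k. (M k - unitmi i k) + unitmi i k) UNIV"
    using pk by (rule sum.cong[OF refl])
  also have "\<dots> = sum (\<lambda>k. M k - unitmi i k) UNIV + sum (unitmi i) UNIV"
    by (simp add: sum.distrib)
  also have "sum (unitmi i) UNIV = 1" unfolding unitmi_def by simp
  finally show "sum (\<lambda>k. M k - unitmi i k) UNIV < sum M UNIV" by simp
qed

definition Eclaim where
  "Eclaim r \<longleftrightarrow> (\<forall>j V. finite V \<and> V \<subseteq> par \<and> (\<forall>v\<in>V. lt (shift j v) r) \<longrightarrow>
     (\<exists>W. evalD A lead depP ch j V W \<and> finite W \<and> W \<subseteq> par \<and> (\<forall>w\<in>W. \<exists>v\<in>V. le w (shift j v))))"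

definition Qclaim where
  "Qclaim r \<longleftrightarrow> (\<forall>M V. finite V \<and> V \<subseteq> par \<and> (\<forall>v\<in>V. lt (msh v M) r) \<longrightarrow>
     (\<exists>W. evalDM A lead depP ch M V W \<and> finite W \<and> W \<subseteq> par \<and> (\<forall>w\<in>W. \<exists>v\<in>V. le w (msh v M))))"

lemma Q_from_E:
  assumes E: "Eclaim r"
  shows "Qclaim r"
  unfolding Qclaim_def
proof (intro allI impI)
  fix M V
  assume h: "finite V \<and> V \<subseteq> par \<and> (\<forall>v\<in>V. lt (msh v M) r)"
  then show "\<exists>W. evalDM A lead depP ch M V W \<and> finite W \<and> W \<subseteq> par \<and> (\<forall>w\<in>W. \<exists>v\<in>V. le w (msh v M))"
  proof (induction "sum M UNIV" arbitrary: M V rule: less_induct)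
    case less
    show ?case
    proof (cases "M = (\<lambda>_. 0)")
      case True
      have "evalDM A lead depP ch M V V" using True evalD_evalDM.intros(2) by simp
      moreover have "\<forall>w\<in>V. \<exists>v\<in>V. le w (msh v M)" unfolding True msh0 using le_refl by blast
      ultimately show ?thesis using less.prems by blast
    next
      case False
      define i where "i = Max {k. M k \<noteq> 0}"
      define M' where "M' = (\<lambda>k. M k - unitmi i k)"
      have mf: "madd (unitmi i) M' = M" "sum M' UNIV < sum M UNIV"
        using Max_facts[OF False i_def] unfolding M'_def by auto
      have mshM: "msh (shift i v) M' = msh v M" for v
        unfolding shift_msh msh_msh mf(1) ..
      have lsr: "\<forall>v\<in>V. lt (shift i v) r"
      proof
        fix v assume vV: "v \<in> V"
        have "le (shift i v) (msh v M)" using le_msh[of "shift i v" M'] mshM by simp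
        moreover have "lt (msh v M) r" using less.prems vV by blast
        ultimately show "lt (shift i v) r" by (rule le_lt_trans)
      qed
      have pre: "finite V \<and> V \<subseteq> par \<and> (\<forall>v\<in>V. lt (shift i v) r)"
        using less.prems lsr by blast
      obtain V' where V': "evalD A lead depP ch i V V'" "finite V'" "V' \<subseteq> par"
        "\<forall>w\<in>V'. \<exists>v\<in>V. le w (shift i v)"
        using E[unfolded Eclaim_def, rule_format, OF pre] by blast
      have lt2: "\<forall>w\<in>V'. lt (msh w M') r"
      proof
        fix w assume "w \<in> V'"
        then obtain v where v: "v \<in> V" "le w (shift i v)" using V'(4) by blast
        have "le (msh w M') (msh v M)" using le_msh_mono[OF v(2), of M'] mshM by simp
        moreover have "lt (msh v M) r" using less.prems v(1) by blast
        ultimately show "lt (msh w M') r" by (rule le_lt_trans)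
      qed
      have pre2: "finite V' \<and> V' \<subseteq> par \<and> (\<forall>v\<in>V'. lt (msh v M') r)"
        using V'(2,3) lt2 by blast
      obtain W where W: "evalDM A lead depP ch M' V' W" "finite W" "W \<subseteq> par"
        "\<forall>w\<in>W. \<exists>v\<in>V'. le w (msh v M')"
        using less.hyps[OF mf(2) pre2] by blast
      have "evalDM A lead depP ch M V W"
        using evalD_evalDM.intros(3)[OF False i_def V'(1)] W(1) unfolding M'_def .
      moreover have "\<forall>w\<in>W. \<exists>v\<in>V. le w (msh v M)"
      proof
        fix w assume "w \<in> W"
        then obtain w' where w': "w' \<in> V'" "le w (msh w' M')" using W(4) by blast
        then obtain v where v: "v \<in> V" "le w' (shift i v)" using V'(4) by blast
        have "le (msh w' M') (msh v M)" using le_msh_mono[OF v(2), of M'] mshM by simp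
        then have "le w (msh v M)" using w'(2) le_trans by blast
        then show "\<exists>v\<in>V. le w (msh v M)" using v(1) by blast
      qed
      ultimately show ?thesis using W(2,3) by blast
    qed
  qed
qed


lemma E_step:
  assumes IH: "\<And>r'. lt r' r \<Longrightarrow> Qclaim r'"
  shows "Eclaim r"
  unfolding Eclaim_def
proof (intro allI impI)
  fix j V
  assume h: "finite V \<and> V \<subseteq> par \<and> (\<forall>v\<in>V. lt (shift j v) r)"
  let ?pr = "\<lambda>v. principal A lead (shift j v)"
  let ?P = "\<lambda>v W. evalDM A lead depP ch (snd (ch j v)) (depP (fst (ch j v))) W \<and> finite W \<and> W \<subseteq> par
     \<and> (\<forall>w\<in>W. \<exists>d\<in>depP (fst (ch j v)). le w (msh d (snd (ch j v))))"
  have ex: "\<exists>W. ?P v W" if v: "v \<in> V" "?pr v" for v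
  proof -
    define \<alpha> where "\<alpha> = fst (ch j v)"
    define M where "M = snd (ch j v)"
    have vpar: "v \<in> par" using h v(1) by blast
    have a: "\<alpha> \<in> A" "shift j v = msh (lead \<alpha>) M"
      using vc[unfolded valid_choice_def, rule_format, OF conjI[OF vpar v(2)]]
      unfolding \<alpha>_def M_def msh_def by simp_all
    have o: "finite (depP \<alpha>)" "depP \<alpha> \<subseteq> par" "\<forall>d\<in>depP \<alpha>. le d (lead \<alpha>) \<and> d \<noteq> lead \<alpha>"
      using orth a(1) unfolding orthonomic_def by auto
    have "\<forall>d\<in>depP \<alpha>. lt (msh d M) (shift j v)"
    proof
      fix d assume "d \<in> depP \<alpha>"
      then have "lt d (lead \<alpha>)" using o(3) unfolding lt_def by blast
      then have "lt (msh d M) (msh (lead \<alpha>) M)" by (rule lt_msh_mono)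
      then show "lt (msh d M) (shift j v)" using a(2) by simp
    qed
    moreover have "Qclaim (shift j v)" using IH h v(1) by blast
    ultimately show ?thesis using o(1,2) unfolding Qclaim_def \<alpha>_def M_def by blast
  qed
  define Wf where "Wf v = (SOME W. ?P v W)" for v
  have Wf: "?P v (Wf v)" if "v \<in> V" "?pr v" for v
    unfolding Wf_def using someI_ex[OF ex[OF that]] .
  define W where "W = V \<union> {shift j v | v. v \<in> V \<and> \<not> ?pr v} \<union> (\<Union>v\<in>{v\<in>V. ?pr v}. Wf v)"
  have fs: "finite {shift j v | v. v \<in> V \<and> \<not> ?pr v}"
    by (rule finite_subset[of _ "shift j ` V"]) (use h in auto)
  have "evalD A lead depP ch j V W"
    by (rule evalD_evalDM.intros(1)[where V=V and j=j and Wf=Wf]) (use Wf in \<open>auto simp: W_def\<close>)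
  moreover have "finite W" unfolding W_def using h fs Wf by (intro finite_UnI finite_UN_I) auto
  moreover have "W \<subseteq> par" unfolding W_def using h Wf
    by (auto simp: parametric_set_def)
  moreover have "\<forall>w\<in>W. \<exists>v\<in>V. le w (shift j v)"
  proof
    fix w assume "w \<in> W"
    then consider "w \<in> V" | v where "v \<in> V" "w = shift j v"
      | v where "v \<in> V" "?pr v" "w \<in> Wf v"
      unfolding W_def by blast
    then show "\<exists>v\<in>V. le w (shift j v)"
    proof cases
      case 1 then show ?thesis using lt_shift unfolding lt_def by blast
    next
      case (2 v) then show ?thesis using le_refl by blast
    next
      case (3 v)
      define \<alpha> where "\<alpha> = fst (ch j v)"
      define M where "M = snd (ch j v)"
      have vpar: "v \<in> par" using h 3(1) by blast
      have a: "\<alpha> \<in> A" "shift j v = msh (lead \<alpha>) M"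
        using vc[unfolded valid_choice_def, rule_format, OF conjI[OF vpar 3(2)]]
        unfolding \<alpha>_def M_def msh_def by simp_all
      have o: "\<forall>d\<in>depP \<alpha>. le d (lead \<alpha>)"
        using orth a(1) unfolding orthonomic_def by auto
      obtain d where d: "d \<in> depP \<alpha>" "le w (msh d M)" using Wf[OF 3(1,2)] 3(3)
        unfolding \<alpha>_def M_def by blast
      have "le (msh d M) (shift j v)" using a(2) le_msh_mono o d(1) by auto
      then show ?thesis using d(2) le_trans 3(1) by blast
    qed
  qed
  ultimately show "\<exists>W. evalD A lead depP ch j V W \<and> finite W \<and> W \<subseteq> par \<and> (\<forall>w\<in>W. \<exists>v\<in>V. le w (shift j v))"
    by blast
qed

lemma all_Q: "Qclaim r"
  using wf_lt
proof (induction r rule: wf_induct_rule)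
  case (less r)
  have "Eclaim r"
  proof (rule E_step)
    fix r' assume "lt r' r"
    then show "Qclaim r'" using less by simp
  qed
  then show ?case by (rule Q_from_E)
qed

lemma upper: "finite T \<Longrightarrow> \<exists>r. \<forall>t\<in>T. lt t r"
proof (induction T rule: finite_induct)
  case empty then show ?case by blast
next
  case (insert t T)
  then obtain r where r: "\<forall>t\<in>T. lt t r" by blast
  define m where "m = (if le t r then r else t)"
  define r2 where "r2 = shift undefined m"
  have m2: "lt m r2" unfolding r2_def by (rule lt_shift)
  have "le t m" using le_refl by (simp add: m_def)
  then have "lt t r2" using m2 by (rule le_lt_trans)
  moreover have "le r m" using le_refl le_total[of t r] by (auto simp: m_def)
  then have "lt r r2" using m2 by (rule le_lt_trans)
  then have "\<forall>x\<in>T. lt x r2" using r lt_trans by blast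
  ultimately have "\<forall>x\<in>insert t T. lt x r2" by simp
  then show ?case by blast
qed

lemma main:
  assumes "finite V" "V \<subseteq> par"
  shows "\<exists>W. evalD A lead depP ch j V W"
proof -
  have "finite (shift j ` V)" using assms(1) by simp
  then obtain r where r: "\<forall>t\<in>shift j ` V. lt t r" using upper by blast
  have pre: "finite V \<and> V \<subseteq> par \<and> (\<forall>v\<in>V. lt (shift j v) r)" using assms r by simp
  have "Eclaim r" by (rule E_step) (rule all_Q)
  from this[unfolded Eclaim_def, rule_format, OF pre] show ?thesis by blast
qed

end

theorem proposition2:
  fixes A :: "'a set"
    and lead :: "'a \<Rightarrow> 'u::finite \<times> ('i::{finite,linorder} \<Rightarrow> nat)"
    and depP :: "'a \<Rightarrow> ('u, 'i) jvar set"
    and le :: "('u, 'i) jvar \<Rightarrow> ('u, 'i) jvar \<Rightarrow> bool"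
    and ch :: "'i \<Rightarrow> ('u, 'i) jvar \<Rightarrow> 'a \<times> ('i \<Rightarrow> nat)"
  assumes "orthonomic A lead depP le"
    and "valid_choice A lead ch"
    and "finite V" and "V \<subseteq> parametric_set A lead"
  shows "\<exists>W. evalD A lead depP ch j V W"
proof -
  interpret sys A lead depP le ch using assms(1,2) by unfold_locales
  show ?thesis by (rule main[OF assms(3,4)])
qed

end
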